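(* Let $\varphi=\frac{1+\sqrt5}{2}$ and for every integer $k$ let $F_k=\frac{\varphi^k-(-1/\varphi)^k}{\varphi+1/\varphi}$. On the complex vector space with basis $\{|n_1,n_2\rangle:n_1,n_2\ge0\}$ define, for $i=1,2$, operators $N_i$, $b_i$, $b_i^+$ acting on the $i$-th index by $N_1|n_1,n_2\rangle=n_1|n_1,n_2\rangle$, $b_1^+|n_1,n_2\rangle=\sqrt{F_{n_1+1}}|n_1+1,n_2\rangle$, $b_1|n_1,n_2\rangle=\sqrt{F_{n_1}}|n_1-1,n_2\rangle$ (zero if $n_1=0$), and analogously for index 2. Let $$J_+^F=b_1^+b_2,\qquad J_-^F=b_2^+b_1,\qquad J_z^F=\frac{N_1-N_2}{2},$$ and let $(-1)^{N_i}$, $F_{2J_z}$, $F_{-2J_z}$ be the diagonal operators acting on $|n_1,n_2\rangle$ by $(-1)^{n_i}$, $F_{n_1-n_2}$, $F_{n_2-n_1}$ respectively. Then $$[J_+^F,J_-^F]=(-1)^{N_2}F_{2J_z}=-(-1)^{N_1}F_{-2J_z},\qquad [J_z^F,J_\pm^F]=\pm J_\pm^F.$$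
   Context: $[A,B]=AB-BA$. *)

theory Defs
  imports Complex_Main
begin

definition phi :: real where "phi = (1 + sqrt 5) / 2"

definition Fib :: "int \<Rightarrow> real" where
  "Fib k = (phi powi k - (-1 / phi) powi k) / (phi + 1 / phi)"

text \<open>A vector sum c(n1,n2) |n1,n2> is represented by its coefficient function c;
  vectors of the space spanned by the basis are those with finite support.\<close>
type_synonym vec = "nat \<times> nat \<Rightarrow> complex"

definition finsupp :: "vec \<Rightarrow> bool" where
  "finsupp v \<longleftrightarrow> finite {p. v p \<noteq> 0}"

definition ket :: "nat \<Rightarrow> nat \<Rightarrow> vec" where
  "ket n1 n2 = (\<lambda>p. if p = (n1, n2) then 1 else 0)"

text \<open>Linear extensions of the basis actions, written on coefficients.
  bp1 (ket n1 n2) = sqrt(F(n1+1)) ket (n1+1) n2 ; b1 (ket n1 n2) = sqrt(F n1) ket (n1-1) n2 (0 if n1=0).\<close>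
definition N1 :: "vec \<Rightarrow> vec" where
  "N1 v = (\<lambda>(n1, n2). of_nat n1 * v (n1, n2))"
definition N2 :: "vec \<Rightarrow> vec" where
  "N2 v = (\<lambda>(n1, n2). of_nat n2 * v (n1, n2))"
definition bp1 :: "vec \<Rightarrow> vec" where
  "bp1 v = (\<lambda>(n1, n2). if n1 = 0 then 0
      else complex_of_real (sqrt (Fib (int n1))) * v (n1 - 1, n2))"
definition bp2 :: "vec \<Rightarrow> vec" where
  "bp2 v = (\<lambda>(n1, n2). if n2 = 0 then 0
      else complex_of_real (sqrt (Fib (int n2))) * v (n1, n2 - 1))"
definition b1 :: "vec \<Rightarrow> vec" where
  "b1 v = (\<lambda>(n1, n2). complex_of_real (sqrt (Fib (int n1 + 1))) * v (n1 + 1, n2))"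
definition b2 :: "vec \<Rightarrow> vec" where
  "b2 v = (\<lambda>(n1, n2). complex_of_real (sqrt (Fib (int n2 + 1))) * v (n1, n2 + 1))"

definition Jplus :: "vec \<Rightarrow> vec" where "Jplus v = bp1 (b2 v)"
definition Jminus :: "vec \<Rightarrow> vec" where "Jminus v = bp2 (b1 v)"
definition Jz :: "vec \<Rightarrow> vec" where "Jz v = (\<lambda>p. (N1 v p - N2 v p) / 2)"

definition diag :: "(nat \<Rightarrow> nat \<Rightarrow> complex) \<Rightarrow> vec \<Rightarrow> vec" where
  "diag d v = (\<lambda>(n1, n2). d n1 n2 * v (n1, n2))"

definition comm :: "(vec \<Rightarrow> vec) \<Rightarrow> (vec \<Rightarrow> vec) \<Rightarrow> vec \<Rightarrow> vec" where
  "comm A B v = (\<lambda>p. A (B v) p - B (A v) p)"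

end

theory Submission imports Defs begin
lemma phi_pos: "phi > 0" unfolding phi_def by (simp add: add_pos_nonneg)
lemma phi_sq: "phi^2 = phi + 1" unfolding phi_def by (simp add: power2_eq_square field_simps)
lemma s_ne: "phi + 1/phi \<noteq> 0" proof -
  have "1/phi > 0" using phi_pos by simp
  thus ?thesis using phi_pos by linarith
qed
lemma Fib_nat: "Fib (int n) = (phi^n - (-1/phi)^n)/(phi+1/phi)"
  unfolding Fib_def by (simp add: power_int_of_nat)
lemma pw: "(x::real)^2 = x+1 \<Longrightarrow> x^Suc(Suc n) = x^Suc n + x^n"
proof -
  assume h: "x^2 = x+1"
  have "x^Suc(Suc n) = x^n * x^2" by (simp add: power2_eq_square mult_ac)
  thus ?thesis unfolding h by (simp add: algebra_simps)
qed
lemma psi_sq: "(-1/phi)^2 = (-1/phi) + 1"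
  using phi_sq phi_pos by (simp add: power2_eq_square field_simps)
lemma Fib_rec: "Fib (int (Suc (Suc n))) = Fib (int (Suc n)) + Fib (int n)"
  unfolding Fib_nat pw[OF phi_sq] pw[OF psi_sq] by (simp add: add_divide_distrib diff_divide_distrib)
lemma Fib_nonneg: "Fib (int n) \<ge> 0 \<and> Fib (int (Suc n)) \<ge> 0"
proof (induction n)
  case 0 show ?case using s_ne phi_pos by (simp add: Fib_def)
next
  case (Suc n) thus ?case using Fib_rec[of n] by simp
qed
lemma Fib_neg: "Fib (- int k) = - ((-1)^k * Fib (int k))"
proof -
  have a: "phi powi (- int k) = 1 / phi^k" by (simp only: power_int_minus power_int_of_nat inverse_eq_divide)
  have iv: "inverse (-1/phi) = -phi" by (simp only: inverse_divide)
  have b: "(-1/phi) powi (- int k) = (-1)^k * phi^k"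
  proof -
    have "(-1/phi) powi (- int k) = (inverse (-1/phi))^k"
      by (simp only: power_int_minus power_int_of_nat power_inverse)
    also have "\<dots> = (-phi)^k" unfolding iv ..
    also have "\<dots> = (-1)^k * phi^k" by (rule power_minus)
    finally show ?thesis .
  qed
  have b2: "(-1/phi)^k = (-1)^k / phi^k" by (rule power_divide)
  have c: "((-1::real)^k) * (-1)^k = 1"
  proof - have "((-1::real)^k) * (-1)^k = ((-1)*(-1))^k" by (rule power_mult_distrib[symmetric]) thus ?thesis by simp qed
  have pk: "phi^k \<noteq> 0" using phi_pos by simp
  have g: "\<And>P c s::real. c*c = 1 \<Longrightarrow> (1/P - c*P)/s = -(c*((P - c/P)/s))"
  proof -
    fix P c s :: real assume cc: "c*c=1"
    have "c*(c/P) = (c*c)/P" by (rule times_divide_eq_right)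
    hence "c*(c/P) = 1/P" unfolding cc .
    have "c*((P - c/P)/s) = (c*P - c*(c/P))/s" by (simp only: times_divide_eq_right right_diff_distrib)
    also have "\<dots> = (c*P - 1/P)/s" unfolding \<open>c*(c/P) = 1/P\<close> ..
    finally have h: "c*((P - c/P)/s) = (c*P - 1/P)/s" .
    have "(1/P - c*P)/s = -((c*P - 1/P)/s)" by (simp add: minus_divide_left)
    thus "(1/P - c*P)/s = -(c*((P - c/P)/s))" unfolding h .
  qed
  show ?thesis unfolding Fib_def a b power_int_of_nat b2 by (rule g[OF c])
qed
lemma mm: "(-1::real)^k * (-1)^k = 1"
proof - have "((-1::real)^k) * (-1)^k = ((-1)*(-1))^k" by (rule power_mult_distrib[symmetric]) thus ?thesis by simp qed
lemma gen: fixes A B C D p q e s :: real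
  assumes "A*B = e" "s = p - q" "s \<noteq> 0"
  shows "((A*C-B*D)/s)*((p*A-q*B)/s) - ((A-B)/s)*((p*(A*C)-q*(B*D))/s) = e*((C-D)/s)"
proof -
  have 1: "(A*C-B*D)*(p*A-q*B) - (A-B)*(p*(A*C)-q*(B*D)) = (A*B)*(C-D)*s" unfolding assms(2) by (simp add: algebra_simps)
  have 2: "((A*C-B*D)/s)*((p*A-q*B)/s) - ((A-B)/s)*((p*(A*C)-q*(B*D))/s) = ((A*C-B*D)*(p*A-q*B) - (A-B)*(p*(A*C)-q*(B*D)))/(s*s)"
    by (simp only: times_divide_times_eq diff_divide_distrib[symmetric])
  show ?thesis unfolding 2 1 using assms(1,3) by simp
qed
lemma gen2: fixes A B C D p q e s :: real
  assumes "A*B = e" "s = p - q" "s \<noteq> 0"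
  shows "((A-B)/s)*((p*(A*C)-q*(B*D))/s) - ((A*C-B*D)/s)*((p*A-q*B)/s) = -(e*((C-D)/s))"
  using gen[OF assms, of C D] by linarith
lemma sdef: "phi + 1/phi = phi - (-1/phi)" by simp
lemma pq: "phi^n * (-1/phi)^n = (-1)^n"
proof -
  have "phi^n * (-1/phi)^n = (phi * (-1/phi))^n" by (rule power_mult_distrib[symmetric])
  moreover have "phi * (-1/phi) = -1" using phi_pos by simp
  ultimately show ?thesis by simp
qed
lemma pows: "(x::real)^(n+k) = x^n*x^k" "x^Suc n = x*x^n" "x^Suc(n+k) = x*(x^n*x^k)"
  by (simp_all add: power_add mult_ac)
lemma dOc: "Fib (int m) * Fib (int n + 1) - Fib (int n) * Fib (int m + 1) = (-1)^n * Fib (int m - int n)"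
proof (cases "n \<le> m")
  case True
  then obtain k where m: "m = n + k" using le_Suc_ex by blast
  have e: "int m - int n = int k" "int n + 1 = int (Suc n)" "int m + 1 = int (Suc (n+k))" using m by auto
  show ?thesis unfolding e Fib_nat unfolding m pows
    by (rule gen[OF pq sdef s_ne])
next
  case False
  hence "m \<le> n" by simp
  then obtain k where m: "n = m + k" using le_Suc_ex by blast
  have e: "int m - int n = - int k" "int n + 1 = int (Suc (m+k))" "int m + 1 = int (Suc m)" using m by auto
  have c: "(-1::real)^(m+k) * (-1)^k = (-1)^m" by (simp add: power_add mult.assoc mm)
  have L: "Fib (int m) * Fib (int n + 1) - Fib (int n) * Fib (int m + 1) = - ((-1)^m * Fib (int k))"
    unfolding e Fib_nat unfolding m pows Fib_nat by (rule gen2[OF pq sdef s_ne])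
  have c': "(-1::real)^n * (-1)^k = (-1)^m" using c m by simp
  have "(-1)^n * Fib (int m - int n) = (-1)^n * -((-1)^k * Fib (int k))" unfolding e(1) Fib_neg ..
  also have "\<dots> = -(((-1)^n*(-1)^k) * Fib (int k))" by (simp only: mult_minus_right mult.assoc)
  also have "\<dots> = -((-1)^m * Fib (int k))" unfolding c' ..
  finally have F: "(-1)^n * Fib (int m - int n) = -((-1)^m * Fib (int k))" .
  show ?thesis by (rule trans[OF L F[symmetric]])
qed
lemma sqF: "complex_of_real (sqrt (Fib (int n))) * complex_of_real (sqrt (Fib (int n))) = complex_of_real (Fib (int n))"
proof -
  have h: "sqrt (Fib (int n)) * sqrt (Fib (int n)) = Fib (int n)" using Fib_nonneg[of n] by simp
  show ?thesis unfolding of_real_mult[symmetric] h ..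
qed
lemma sqF1: "complex_of_real (sqrt (Fib (int n + 1))) * complex_of_real (sqrt (Fib (int n + 1))) = complex_of_real (Fib (int n + 1))"
proof -
  have e: "int n + 1 = int (Suc n)" by simp
  show ?thesis unfolding e by (rule sqF)
qed
lemma Jplus_at: "Jplus v (a,b) = (if a=0 then 0 else complex_of_real (sqrt (Fib (int a))) * (complex_of_real (sqrt (Fib (int b + 1))) * v (a-1,b+1)))"
  by (simp add: Jplus_def bp1_def b2_def)
lemma Jminus_at: "Jminus v (a,b) = (if b=0 then 0 else complex_of_real (sqrt (Fib (int b))) * (complex_of_real (sqrt (Fib (int a + 1))) * v (a+1,b-1)))"
  by (simp add: Jminus_def bp2_def b1_def)
lemma Jz_at: "Jz v (a,b) = (of_nat a - of_nat b)/2 * v (a,b)"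
  by (simp add: Jz_def N1_def N2_def algebra_simps diff_divide_distrib)
lemma F0: "Fib 0 = 0" by (simp add: Fib_def)
lemma PM: "Jplus (Jminus v) (a,b) = complex_of_real (Fib (int a) * Fib (int b + 1)) * v (a,b)"
proof (cases "a = 0")
  case True thus ?thesis by (simp add: Jplus_at F0)
next
  case False
  hence e: "int (a - 1) + 1 = int a" "a - 1 + 1 = a" by auto
  have "Jplus (Jminus v) (a,b) = (complex_of_real (sqrt (Fib (int a))) * complex_of_real (sqrt (Fib (int a)))) *
     (complex_of_real (sqrt (Fib (int b + 1))) * complex_of_real (sqrt (Fib (int b + 1)))) * v (a,b)"
    using False by (simp add: Jplus_at Jminus_at e mult_ac add.commute)
  thus ?thesis unfolding sqF sqF1 by (simp add: ac_simps)
qed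
lemma MP: "Jminus (Jplus v) (a,b) = complex_of_real (Fib (int b) * Fib (int a + 1)) * v (a,b)"
proof (cases "b = 0")
  case True thus ?thesis by (simp add: Jminus_at F0)
next
  case False
  hence e: "int (b - 1) + 1 = int b" "b - 1 + 1 = b" by auto
  have "Jminus (Jplus v) (a,b) = (complex_of_real (sqrt (Fib (int b))) * complex_of_real (sqrt (Fib (int b)))) *
     (complex_of_real (sqrt (Fib (int a + 1))) * complex_of_real (sqrt (Fib (int a + 1)))) * v (a,b)"
    using False by (simp add: Jplus_at Jminus_at e mult_ac add.commute)
  thus ?thesis unfolding sqF sqF1 by (simp add: ac_simps)
qed
lemma negF: "(-1::real)^b * Fib (int a - int b) = - ((-1)^a * Fib (int b - int a))"
proof (cases "a \<le> b")
  case True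
  then obtain k where m: "b = a + k" using le_Suc_ex by blast
  have e: "int a - int b = - int k" "int b - int a = int k" using m by auto
  have c: "(-1::real)^a * (-1)^k * (-1)^k = (-1)^a" by (simp add: mult.assoc mm)
  show ?thesis unfolding e Fib_neg unfolding m using c by (simp add: power_add)
next
  case False
  hence "b \<le> a" by simp
  then obtain k where m: "a = b + k" using le_Suc_ex by blast
  have e: "int b - int a = - int k" "int a - int b = int k" using m by auto
  have c: "(-1::real)^b * (-1)^k * (-1)^k = (-1)^b" by (simp add: mult.assoc mm)
  show ?thesis unfolding e Fib_neg unfolding m using c by (simp add: power_add)
qed

theorem mainTheorem14:
  fixes v :: vec
  assumes "finsupp v"
  shows "comm Jplus Jminus v
           = diag (\<lambda>n1 n2. (-1) ^ n2 * complex_of_real (Fib (int n1 - int n2))) v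
       \<and> comm Jplus Jminus v
           = (\<lambda>p. - diag (\<lambda>n1 n2. (-1) ^ n1 * complex_of_real (Fib (int n2 - int n1))) v p)
       \<and> comm Jz Jplus v = Jplus v
       \<and> comm Jz Jminus v = (\<lambda>p. - Jminus v p)"
proof -
  have 1: "comm Jplus Jminus v
           = diag (\<lambda>n1 n2. (-1) ^ n2 * complex_of_real (Fib (int n1 - int n2))) v"
  proof
    fix p :: "nat \<times> nat" obtain a b where p: "p = (a,b)" by fastforce
    have "complex_of_real (Fib (int a) * Fib (int b + 1)) - complex_of_real (Fib (int b) * Fib (int a + 1))
       = (-1)^b * complex_of_real (Fib (int a - int b))"
    proof -
      have "complex_of_real (Fib (int a) * Fib (int b + 1) - Fib (int b) * Fib (int a + 1)) = complex_of_real ((-1)^b * Fib (int a - int b))"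
        using dOc[of a b] by simp
      thus ?thesis by (simp only: of_real_diff of_real_mult of_real_power of_real_minus of_real_1)
    qed
    thus "comm Jplus Jminus v p = diag (\<lambda>n1 n2. (-1) ^ n2 * complex_of_real (Fib (int n1 - int n2))) v p"
      unfolding p comm_def diag_def PM MP by (simp add: algebra_simps flip: left_diff_distrib)
  qed
  have 2: "diag (\<lambda>n1 n2. (-1) ^ n2 * complex_of_real (Fib (int n1 - int n2))) v
       = (\<lambda>p. - diag (\<lambda>n1 n2. (-1) ^ n1 * complex_of_real (Fib (int n2 - int n1))) v p)"
  proof
    fix p :: "nat \<times> nat" obtain a b where p: "p = (a,b)" by fastforce
    have "(-1)^b * complex_of_real (Fib (int a - int b)) = - ((-1)^a * complex_of_real (Fib (int b - int a)))"
    proof -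
      have "complex_of_real ((-1)^b * Fib (int a - int b)) = complex_of_real (- ((-1)^a * Fib (int b - int a)))"
        using negF[of b a] by simp
      thus ?thesis by (simp only: of_real_mult of_real_power of_real_minus of_real_1)
    qed
    thus "diag (\<lambda>n1 n2. (-1) ^ n2 * complex_of_real (Fib (int n1 - int n2))) v p =
       - diag (\<lambda>n1 n2. (-1) ^ n1 * complex_of_real (Fib (int n2 - int n1))) v p"
      unfolding p diag_def by simp
  qed
  have gl: "\<And>x y X::complex. (x - y)/2 * X - ((x-1) - (y+1))/2 * X = X"
    by (simp add: algebra_simps diff_divide_distrib add_divide_distrib)
  have gl2: "\<And>x y X::complex. (x - y)/2 * X - ((x+1) - (y-1))/2 * X = - X"
    by (simp add: algebra_simps diff_divide_distrib add_divide_distrib)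
  have 3: "comm Jz Jplus v = Jplus v"
  proof
    fix p :: "nat \<times> nat" obtain a b where p: "p = (a,b)" by fastforce
    have h: "Jplus (Jz v) (a,b) = ((of_nat a - 1) - (of_nat b + 1))/2 * Jplus v (a,b)"
    proof (cases "a = 0")
      case True thus ?thesis by (simp add: Jplus_at)
    next
      case False
      hence e: "(of_nat (a - 1) :: complex) = of_nat a - 1" by (simp add: of_nat_diff)
      show ?thesis using False by (simp add: Jz_at Jplus_at e mult_ac)
    qed
    show "comm Jz Jplus v p = Jplus v p" unfolding p comm_def h Jz_at by (rule gl)
  qed
  have 4: "comm Jz Jminus v = (\<lambda>p. - Jminus v p)"
  proof
    fix p :: "nat \<times> nat" obtain a b where p: "p = (a,b)" by fastforce
    have h: "Jminus (Jz v) (a,b) = ((of_nat a + 1) - (of_nat b - 1))/2 * Jminus v (a,b)"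
    proof (cases "b = 0")
      case True thus ?thesis by (simp add: Jminus_at)
    next
      case False
      hence e: "(of_nat (b - 1) :: complex) = of_nat b - 1" by (simp add: of_nat_diff)
      show ?thesis using False by (simp add: Jz_at Jminus_at e mult_ac)
    qed
    show "comm Jz Jminus v p = - Jminus v p" unfolding p comm_def h Jz_at by (rule gl2)
  qed
  show ?thesis using 1 2 3 4 by simp
qed
end
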